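(* Let $C$ be a closed subset of the complete Riemannian manifold $(M,g)$, let $t,s>0$ and $y\in M$, and define $\varphi_{t,s,y}:M\to\mathbb{R}$ by $\varphi_{t,s,y}(x)=\dfrac{d_C(x)^2}{2(t+s)}-\dfrac{d(y,x)^2}{2s}$. If $x\in M$ satisfies $\varphi_{t,s,y}(x)\ge\varphi_{t,s,y}(y)$, then $$d(x,y)\le\frac{2s}{t}d_C(y)\quad\text{and}\quad d_C(x)\le\Big(1+\frac{2s}{t}\Big)d_C(y).$$
   Context: $d$ is the Riemannian distance of $g$ and $d_C(x)=\inf_{c\in C}d(c,x)$. *)

theory Defs
  imports "HOL-Analysis.Analysis"
begin

definition phi_tsy :: "'a::metric_space set \<Rightarrow> real \<Rightarrow> real \<Rightarrow> 'a \<Rightarrow> 'a \<Rightarrow> real" where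
  "phi_tsy C t s y x = (infdist x C)\<^sup>2 / (2 * (t + s)) - (dist y x)\<^sup>2 / (2 * s)"

end

theory Submission
  imports Defs
begin

theorem lemma7p1:
  fixes C :: "'a::complete_space set" and t s :: real and x y :: 'a
  assumes "closed C" and "t > 0" and "s > 0"
    and "phi_tsy C t s y x \<ge> phi_tsy C t s y y"
  shows "dist x y \<le> (2 * s / t) * infdist y C
       \<and> infdist x C \<le> (1 + 2 * s / t) * infdist y C"
proof -
  define a where "a = infdist y C"
  define b where "b = infdist x C"
  define r where "r = dist x y"
  have a0: "a \<ge> 0" "b \<ge> 0" "r \<ge> 0" unfolding a_def b_def r_def by (auto simp: infdist_nonneg)
  have tri: "b \<le> a + r" unfolding a_def b_def r_def by (rule infdist_triangle)
  have h: "b\<^sup>2 / (2 * (t + s)) - r\<^sup>2 / (2 * s) \<ge> a\<^sup>2 / (2 * (t + s))"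
    using assms(4) unfolding phi_tsy_def a_def b_def r_def by (simp add: dist_commute)
  have h2: "s * b\<^sup>2 - (t + s) * r\<^sup>2 \<ge> s * a\<^sup>2"
  proof -
    have "b\<^sup>2 / (2 * (t + s)) - r\<^sup>2 / (2 * s) = (s * b\<^sup>2 - (t + s) * r\<^sup>2) / (2 * s * (t + s))"
      using assms(2,3) by (simp add: divide_simps) (simp add: algebra_simps power2_eq_square)
    moreover have "a\<^sup>2 / (2 * (t + s)) = (s * a\<^sup>2) / (2 * s * (t + s))"
      using assms(2,3) by (simp add: divide_simps)
    ultimately have "(s * a\<^sup>2) / (2 * s * (t + s)) \<le> (s * b\<^sup>2 - (t + s) * r\<^sup>2) / (2 * s * (t + s))"
      using h by simp
    moreover have "2 * s * (t + s) > 0" using assms(2,3) by simp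
    ultimately show ?thesis using divide_right_mono_neg by (smt (verit) divide_le_cancel)
  qed
  have "b\<^sup>2 \<le> (a + r)\<^sup>2" using tri a0 by (intro power_mono) auto
  hence "s * b\<^sup>2 \<le> s * (a + r)\<^sup>2" using assms(3) by simp
  hence "t * r\<^sup>2 \<le> 2 * s * a * r" using h2 by (simp add: power2_eq_square algebra_simps)
  hence "t * r \<le> 2 * s * a"
  proof (cases "r = 0")
    case False
    with a0 have "r > 0" by simp
    moreover assume "t * r\<^sup>2 \<le> 2 * s * a * r"
    ultimately show ?thesis by (simp add: power2_eq_square)
  next
    case True then show ?thesis using a0 assms by simp
  qed
  hence r: "r \<le> (2 * s / t) * a" using assms(2) by (simp add: field_simps)
  moreover have "b \<le> (1 + 2 * s / t) * a" using tri r by (simp add: algebra_simps)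
  ultimately show ?thesis unfolding a_def b_def r_def by simp
qed

end
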